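(* For all policies $\pi,\pi'\in\Pi$: if $\mathbf{Z}^{\pi}\succ_d\mathbf{Z}^{\pi'}$ then $\mathbf{V}^{\pi}\succ_p\mathbf{V}^{\pi'}$.
   Context: $\Pi$ is a family of policies of a multi-objective sequential decision problem (e.g. a multi-objective Markov decision process with $d$ objectives, vector reward $\mathbf{r}_t\in\mathbb{R}^d$ and discount $\gamma$). For $\pi\in\Pi$, $\mathbf{Z}^{\pi}=(Z^\pi_1,\dots,Z^\pi_d)^T$ is the random return vector $\sum_{t\ge0}\gamma^t\mathbf{r}_t$ obtained by following $\pi$, and $\mathbf{V}^\pi=\mathbb{E}[\mathbf{Z}^\pi]$ is its (finite) expected value. For $\mathbf{x},\mathbf{y}\in\mathbb{R}^d$: $\mathbf{y}\preceq_p\mathbf{x}$ iff $y_i\le x_i$ for all $i$; $\mathbf{x}\succ_p\mathbf{y}$ (Pareto dominance) iff $x_i\ge y_i$ for all $i$ and $x_i>y_i$ for some $i$. CDF: $F_{\mathbf{X}}(\mathbf{x})=P(\mathbf{X}\preceq_p\mathbf{x})$. $\mathbf{X}\succeq_{\mathrm{FSD}}\mathbf{Y}$ iff $F_{\mathbf{X}}\le F_{\mathbf{Y}}$ pointwise; $\mathbf{X}\succ_{\mathrm{FSD}}\mathbf{Y}$ iff additionally $F_{\mathbf{X}}(\mathbf{v})<F_{\mathbf{Y}}(\mathbf{v})$ for some $\mathbf{v}$ (same for real random variables). Distributional dominance $\mathbf{X}\succ_d\mathbf{Y}$: $\mathbf{X}\succeq_{\mathrm{FSD}}\mathbf{Y}$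 and $X_i\succ_{\mathrm{FSD}}Y_i$ for some $i\in\{1,\dots,d\}$. *)

theory Defs
  imports "HOL-Probability.Probability"
begin

text \<open>Vectors in R^d are modelled as real^'d (d = CARD('d)). The random return
vector Z^pi of a policy is represented by its law, a probability measure on the
Borel sets of real^'d.\<close>

definition pareto_le :: "real^'d \<Rightarrow> real^'d \<Rightarrow> bool" where
  "pareto_le y x \<longleftrightarrow> (\<forall>i. y$i \<le> x$i)"

definition pareto_dom :: "real^'d \<Rightarrow> real^'d \<Rightarrow> bool" where
  "pareto_dom x y \<longleftrightarrow> (\<forall>i. x$i \<ge> y$i) \<and> (\<exists>i. x$i > y$i)"

definition cdf_vec :: "(real^'d) measure \<Rightarrow> real^'d \<Rightarrow> real" where
  "cdf_vec M x = measure M {z. pareto_le z x}"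

definition cdf_comp :: "(real^'d) measure \<Rightarrow> 'd \<Rightarrow> real \<Rightarrow> real" where
  "cdf_comp M i t = measure M {z. z$i \<le> t}"

definition fsd_ge :: "(real^'d) measure \<Rightarrow> (real^'d) measure \<Rightarrow> bool" where
  "fsd_ge M N \<longleftrightarrow> (\<forall>x. cdf_vec M x \<le> cdf_vec N x)"

definition fsd_strict_comp :: "(real^'d) measure \<Rightarrow> (real^'d) measure \<Rightarrow> 'd \<Rightarrow> bool" where
  "fsd_strict_comp M N i \<longleftrightarrow>
     (\<forall>t. cdf_comp M i t \<le> cdf_comp N i t) \<and> (\<exists>t. cdf_comp M i t < cdf_comp N i t)"

definition dist_dom :: "(real^'d) measure \<Rightarrow> (real^'d) measure \<Rightarrow> bool" where
  "dist_dom M N \<longleftrightarrow> fsd_ge M N \<and> (\<exists>i. fsd_strict_comp M N i)"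

definition expval :: "(real^'d) measure \<Rightarrow> real^'d" where
  "expval M = integral\<^sup>L M (\<lambda>z. z)"

end

theory Submission
  imports Defs
begin

lemma pos_part_formula:
  fixes M :: "real measure"
  assumes P: "prob_space M" and S: "sets M = sets borel"
  shows "(\<integral>\<^sup>+x. ennreal x \<partial>M) = (\<integral>\<^sup>+t. indicator {0..} t * emeasure M {t<..} \<partial>lborel)"
proof -
  interpret prob_space M by fact
  interpret pair_sigma_finite M lborel
    by (simp add: pair_sigma_finite.intro sigma_finite_measure_axioms lborel.sigma_finite_measure_axioms)
  have "(\<integral>\<^sup>+x. ennreal x \<partial>M) = (\<integral>\<^sup>+x. (\<integral>\<^sup>+t. indicator {0..<x} t \<partial>lborel) \<partial>M)"
    by (intro nn_integral_cong) (case_tac "0 \<le> x"; auto simp: ennreal_neg)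
  also have "\<dots> = (\<integral>\<^sup>+t. (\<integral>\<^sup>+x. indicator {0..<x} t \<partial>M) \<partial>lborel)"
    by (rule Fubini'[symmetric])
       (auto simp: case_prod_unfold indicator_def S cong: measurable_cong_sets)
  also have "\<dots> = (\<integral>\<^sup>+t. (\<integral>\<^sup>+x. indicator {0..} t * indicator {t<..} x \<partial>M) \<partial>lborel)"
    by (intro nn_integral_cong) (auto simp: indicator_def)
  also have "\<dots> = (\<integral>\<^sup>+t. indicator {0..} t * emeasure M {t<..} \<partial>lborel)"
    by (intro nn_integral_cong) (simp add: nn_integral_cmult_indicator S)
  finally show ?thesis .
qed

lemma neg_part_formula:
  fixes M :: "real measure"
  assumes P: "prob_space M" and S: "sets M = sets borel"
  shows "(\<integral>\<^sup>+x. ennreal (- x) \<partial>M) = (\<integral>\<^sup>+t. indicator {..<0} t * emeasure M {..t} \<partial>lborel)"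
proof -
  interpret prob_space M by fact
  interpret pair_sigma_finite M lborel
    by (simp add: pair_sigma_finite.intro sigma_finite_measure_axioms lborel.sigma_finite_measure_axioms)
  have "(\<integral>\<^sup>+x. ennreal (- x) \<partial>M) = (\<integral>\<^sup>+x. (\<integral>\<^sup>+t. indicator {x..<0} t \<partial>lborel) \<partial>M)"
    by (intro nn_integral_cong) (case_tac "x \<le> 0"; auto simp: ennreal_neg)
  also have "\<dots> = (\<integral>\<^sup>+t. (\<integral>\<^sup>+x. indicator {x..<0} t \<partial>M) \<partial>lborel)"
    by (rule Fubini'[symmetric])
       (auto simp: case_prod_unfold indicator_def S cong: measurable_cong_sets)
  also have "\<dots> = (\<integral>\<^sup>+t. (\<integral>\<^sup>+x. indicator {..<0} t * indicator {..t} x \<partial>M) \<partial>lborel)"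
    by (intro nn_integral_cong) (auto simp: indicator_def)
  also have "\<dots> = (\<integral>\<^sup>+t. indicator {..<0} t * emeasure M {..t} \<partial>lborel)"
    by (intro nn_integral_cong) (simp add: nn_integral_cmult_indicator S)
  finally show ?thesis .
qed

lemma enn2real_strict_mono:
  fixes x y :: ennreal
  assumes "x < y" "y < top" shows "enn2real x < enn2real y"
  using assms by (cases x rule: ennreal_cases; cases y rule: ennreal_cases) (auto simp: ennreal_less_iff)

lemma emeasure_gt_cdf:
  fixes M :: "real measure"
  assumes P: "prob_space M" and S: "sets M = sets borel"
  shows "emeasure M {t<..} = ennreal (1 - cdf M t)"
proof -
  interpret finite_borel_measure M
    using P S by (simp add: finite_borel_measure.intro finite_borel_measure_axioms.intro prob_space.finite_measure)
  have "{t<..} = space M - {..t}" using borel_UNIV by auto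
  then have "measure M {t<..} = 1 - cdf M t"
    using prob_space.prob_compl[OF P, of "{..t}"] S by (simp add: cdf_def)
  then show ?thesis by (simp add: emeasure_eq_measure)
qed

lemma mean_cmp:
  fixes M N :: "real measure"
  assumes PM: "prob_space M" and PN: "prob_space N" and SM: "sets M = sets borel" and SN: "sets N = sets borel"
    and IM: "integrable M (\<lambda>x. x)" and IN: "integrable N (\<lambda>x. x)"
    and le: "\<And>t. cdf M t \<le> cdf N t"
  shows "integral\<^sup>L N (\<lambda>x. x) \<le> integral\<^sup>L M (\<lambda>x. x)"
    and "(\<exists>t. cdf M t < cdf N t) \<Longrightarrow> integral\<^sup>L N (\<lambda>x. x) < integral\<^sup>L M (\<lambda>x. x)"
proof -
  interpret M: finite_borel_measure M
    using PM SM by (simp add: finite_borel_measure.intro finite_borel_measure_axioms.intro prob_space.finite_measure)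
  interpret N: finite_borel_measure N
    using PN SN by (simp add: finite_borel_measure.intro finite_borel_measure_axioms.intro prob_space.finite_measure)
  define gM where "gM t = ennreal (indicator {0..} t * (1 - cdf M t))" for t
  define gN where "gN t = ennreal (indicator {0..} t * (1 - cdf N t))" for t
  define hM where "hM t = ennreal (indicator {..<0} t * cdf M t)" for t
  define hN where "hN t = ennreal (indicator {..<0} t * cdf N t)" for t
  have pM: "(\<integral>\<^sup>+x. ennreal x \<partial>M) = integral\<^sup>N lborel gM"
    unfolding pos_part_formula[OF PM SM] gM_def emeasure_gt_cdf[OF PM SM]
    by (intro nn_integral_cong) (auto simp: indicator_def)
  have pN: "(\<integral>\<^sup>+x. ennreal x \<partial>N) = integral\<^sup>N lborel gN"
    unfolding pos_part_formula[OF PN SN] gN_def emeasure_gt_cdf[OF PN SN]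
    by (intro nn_integral_cong) (auto simp: indicator_def)
  have nM: "(\<integral>\<^sup>+x. ennreal (- x) \<partial>M) = integral\<^sup>N lborel hM"
    unfolding neg_part_formula[OF PM SM] hM_def
    by (intro nn_integral_cong) (auto simp: indicator_def M.emeasure_eq_measure cdf_def)
  have nN: "(\<integral>\<^sup>+x. ennreal (- x) \<partial>N) = integral\<^sup>N lborel hN"
    unfolding neg_part_formula[OF PN SN] hN_def
    by (intro nn_integral_cong) (auto simp: indicator_def N.emeasure_eq_measure cdf_def)
  have fin: "(\<integral>\<^sup>+x. ennreal x \<partial>K) < \<infinity>" "(\<integral>\<^sup>+x. ennreal (- x) \<partial>K) < \<infinity>"
    if "integrable K (\<lambda>x::real. x)" for K
    using integrableD(2,3)[OF that] by (auto simp: less_top)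
  have eM: "integral\<^sup>L M (\<lambda>x. x) = enn2real (integral\<^sup>N lborel gM) - enn2real (integral\<^sup>N lborel hM)"
    using real_lebesgue_integral_def[OF IM] pM nM by simp
  have eN: "integral\<^sup>L N (\<lambda>x. x) = enn2real (integral\<^sup>N lborel gN) - enn2real (integral\<^sup>N lborel hN)"
    using real_lebesgue_integral_def[OF IN] pN nN by simp
  have fgM: "integral\<^sup>N lborel gM < \<infinity>" and fhM: "integral\<^sup>N lborel hM < \<infinity>"
    using fin[OF IM] pM nM by auto
  have fgN: "integral\<^sup>N lborel gN < \<infinity>" and fhN: "integral\<^sup>N lborel hN < \<infinity>"
    using fin[OF IN] pN nN by auto
  have gle: "gN t \<le> gM t" and hle: "hM t \<le> hN t" for t
    using le[of t] by (auto simp: gM_def gN_def hM_def hN_def indicator_def intro!: ennreal_leI)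
  have igle: "integral\<^sup>N lborel gN \<le> integral\<^sup>N lborel gM"
    by (intro nn_integral_mono gle)
  have ihle: "integral\<^sup>N lborel hM \<le> integral\<^sup>N lborel hN"
    by (intro nn_integral_mono hle)
  show "integral\<^sup>L N (\<lambda>x. x) \<le> integral\<^sup>L M (\<lambda>x. x)"
    unfolding eM eN using enn2real_mono[OF igle] enn2real_mono[OF ihle] fgM fhN by simp
  have mM: "mono (cdf M)" "mono (cdf N)"
    by (auto intro!: monoI M.cdf_nondecreasing N.cdf_nondecreasing)
  have meas: "gM \<in> borel_measurable lborel" "gN \<in> borel_measurable lborel"
     "hM \<in> borel_measurable lborel" "hN \<in> borel_measurable lborel"
    unfolding gM_def gN_def hM_def hN_def
    using borel_measurable_mono[OF mM(1)] borel_measurable_mono[OF mM(2)]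
    by (auto simp: measurable_lborel1)
  assume "\<exists>t. cdf M t < cdf N t"
  then obtain t0 where t0: "cdf M t0 < cdf N t0" by blast
  have "((cdf M) \<longlongrightarrow> cdf M t0) (at_right t0)"
    using M.cdf_is_right_cont by (simp add: continuous_within)
  from order_tendstoD(2)[OF this t0]
  have "eventually (\<lambda>t. cdf M t < cdf N t0) (at_right t0)" .
  then obtain b where b: "b > t0" and bP: "\<And>t. t > t0 \<Longrightarrow> t < b \<Longrightarrow> cdf M t < cdf N t0"
    using eventually_at_right[of t0 "t0+1"] by auto
  have lt: "cdf M t < cdf N t" if "t0 < t" "t < b" for t
    using bP[OF that] N.cdf_nondecreasing[of t0 t] that by simp
  have notAE: False if AE: "AE t in lborel. P t" and I: "\<And>t. a < t \<Longrightarrow> t < c \<Longrightarrow> \<not> P t" and ac: "a < c"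
    for P and a c :: real
  proof -
    have "AE t in lborel. t \<notin> {a<..<c}" using AE by eventually_elim (use I in auto)
    then have "emeasure lborel {a<..<c} = 0"
      by (subst (asm) AE_iff_measurable[of "{a<..<c}"]) (auto simp: borel_open)
    then show False using ac by simp
  qed
  show "integral\<^sup>L N (\<lambda>x. x) < integral\<^sup>L M (\<lambda>x. x)"
  proof (cases "t0 \<ge> 0")
    case True
    have "integral\<^sup>N lborel gN < integral\<^sup>N lborel gM"
    proof (rule nn_integral_less[OF meas(2) meas(1)])
      show "integral\<^sup>N lborel gN \<noteq> \<infinity>" using fgN by simp
      show "AE x in lborel. gN x \<le> gM x" using gle by simp
      show "\<not> (AE x in lborel. gM x \<le> gN x)"
      proof
        assume "AE x in lborel. gM x \<le> gN x"
        moreover have "\<not> gM t \<le> gN t" if "t0 < t" "t < b" for t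
          using lt[OF that] that True prob_space.prob_le_1[OF PN, of "{..t}"] by (simp add: gM_def gN_def indicator_def ennreal_le_iff2 cdf_def)
        ultimately show False using notAE[of _ t0 b] b by blast
      qed
    qed
    then have "enn2real (integral\<^sup>N lborel gN) < enn2real (integral\<^sup>N lborel gM)"
      using fgM by (simp add: enn2real_strict_mono)
    then show ?thesis
      unfolding eM eN using enn2real_mono[OF ihle] fhN by simp
  next
    case False
    define c where "c = min b 0"
    have c: "t0 < c" using b False by (simp add: c_def)
    have "integral\<^sup>N lborel hM < integral\<^sup>N lborel hN"
    proof (rule nn_integral_less[OF meas(3) meas(4)])
      show "integral\<^sup>N lborel hM \<noteq> \<infinity>" using fhM by simp
      show "AE x in lborel. hM x \<le> hN x" using hle by simp
      show "\<not> (AE x in lborel. hN x \<le> hM x)"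
      proof
        assume "AE x in lborel. hN x \<le> hM x"
        moreover have "\<not> hN t \<le> hM t" if "t0 < t" "t < c" for t
          using lt[of t] that M.cdf_nonneg[of t] by (simp add: hM_def hN_def indicator_def ennreal_le_iff2 c_def)
        ultimately show False using notAE[of _ t0 c] c by blast
      qed
    qed
    then have "enn2real (integral\<^sup>N lborel hM) < enn2real (integral\<^sup>N lborel hN)"
      using fhN by (simp add: enn2real_strict_mono)
    then show ?thesis
      unfolding eM eN using enn2real_mono[OF igle] fgM by simp
  qed
qed


lemma cdf_comp_lim:
  fixes M :: "(real^'d) measure"
  assumes P: "prob_space M" and S: "sets M = sets borel"
  shows "(\<lambda>n. cdf_vec M (\<chi> j. if j = i then t else real n)) \<longlonglongrightarrow> cdf_comp M i t"
proof -
  interpret prob_space M by fact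
  define A where "A n = {z::real^'d. pareto_le z (\<chi> j. if j = i then t else real n)}" for n :: nat
  have sp: "space M = UNIV" using sets_eq_imp_space_eq[OF S] by simp
  have "range A \<subseteq> sets M"
  proof
    fix X assume "X \<in> range A"
    then obtain n where X: "X = A n" by blast
    have "closed (A n)" unfolding A_def pareto_le_def by (rule closed_interval_left_cart)
    then show "X \<in> sets M" using X S by (simp add: borel_closed)
  qed
  moreover have "incseq A"
    apply (rule incseq_SucI)
    apply (clarsimp simp: A_def pareto_le_def)
    subgoal for n x j by (drule spec[of _ j]) auto
    done
  ultimately have "(\<lambda>n. measure M (A n)) \<longlonglongrightarrow> measure M (\<Union>n. A n)"
    by (rule finite_Lim_measure_incseq)
  moreover have "(\<Union>n. A n) = {z. z$i \<le> t}"
  proof (intro set_eqI iffI)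
    fix z :: "real^'d" assume "z \<in> {z. z$i \<le> t}"
    have "\<forall>j. \<exists>n::nat. z$j \<le> real n" by (meson real_arch_simple)
    then obtain nf where nf: "\<And>j. z$j \<le> real (nf j)" by metis
    define n where "n = Max (range nf)"
    have "z$j \<le> real n" for j
      using nf[of j] Max_ge[of "range nf" "nf j"] unfolding n_def
      by (meson finite finite_imageI of_nat_le_iff order_trans rangeI)
    then show "z \<in> (\<Union>n. A n)" using \<open>z \<in> _\<close> by (auto simp: A_def pareto_le_def)
  qed (auto simp: A_def pareto_le_def, metis)
  ultimately show ?thesis by (simp add: cdf_vec_def cdf_comp_def A_def)
qed

lemma marg_le:
  fixes M N :: "(real^'d) measure"
  assumes "prob_space M" "sets M = sets borel" "prob_space N" "sets N = sets borel" "fsd_ge M N"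
  shows "cdf_comp M i t \<le> cdf_comp N i t"
  using LIMSEQ_le[OF cdf_comp_lim[OF assms(1,2)] cdf_comp_lim[OF assms(3,4)]] assms(5)
  by (auto simp: fsd_ge_def)

lemma marg_facts:
  fixes M :: "(real^'d) measure" and i :: 'd
  assumes P: "prob_space M" and S: "sets M = sets borel" and I: "integrable M (\<lambda>z. z)"
  defines "K \<equiv> distr M borel (\<lambda>z. z$i)"
  shows "prob_space K" "sets K = sets borel" "integrable K (\<lambda>x. x)"
    "\<And>t. cdf K t = cdf_comp M i t" "expval M $ i = integral\<^sup>L K (\<lambda>x. x)"
proof -
  have m: "(\<lambda>z::real^'d. z$i) \<in> measurable M borel"
    using S by (simp cong: measurable_cong_sets)
  show "prob_space K" unfolding K_def by (rule prob_space.prob_space_distr[OF P m])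
  show "sets K = sets borel" unfolding K_def by simp
  show "integrable K (\<lambda>x. x)" unfolding K_def
    using integrable_bounded_linear[OF bounded_linear_vec_nth I, of i]
    by (subst integrable_distr_eq[OF m]) auto
  have sp: "space M = UNIV" using sets_eq_imp_space_eq[OF S] by simp
  show "cdf K t = cdf_comp M i t" for t
    unfolding K_def cdf_def cdf_comp_def using sp by (subst measure_distr[OF m]) (auto intro!: arg_cong[where f="measure M"])
  show "expval M $ i = integral\<^sup>L K (\<lambda>x. x)"
    unfolding K_def expval_def
    by (subst integral_distr[OF m]) (auto simp: integral_bounded_linear[OF bounded_linear_vec_nth I])
qed

theorem lemma4p1:
  fixes Pi :: "'p set" and Z :: "'p \<Rightarrow> (real^'d) measure"
  assumes laws: "\<And>p. p \<in> Pi \<Longrightarrow> prob_space (Z p) \<and> sets (Z p) = sets borel"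
    and finite_exp: "\<And>p. p \<in> Pi \<Longrightarrow> integrable (Z p) (\<lambda>z. z)"
  shows "\<forall>p\<in>Pi. \<forall>p'\<in>Pi. dist_dom (Z p) (Z p') \<longrightarrow> pareto_dom (expval (Z p)) (expval (Z p'))"
proof (intro ballI impI)
  fix p p' assume pP: "p \<in> Pi" and qP: "p' \<in> Pi" and dd: "dist_dom (Z p) (Z p')"
  note A = laws[OF pP] laws[OF qP]
  note fM = marg_facts[OF conjunct1[OF A(1)] conjunct2[OF A(1)] finite_exp[OF pP]]
  note fN = marg_facts[OF conjunct1[OF A(2)] conjunct2[OF A(2)] finite_exp[OF qP]]
  have fge: "fsd_ge (Z p) (Z p')" using dd by (simp add: dist_dom_def)
  have mle: "cdf_comp (Z p) i t \<le> cdf_comp (Z p') i t" for i t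
    using marg_le[OF conjunct1[OF A(1)] conjunct2[OF A(1)] conjunct1[OF A(2)] conjunct2[OF A(2)] fge] .
  have ge: "expval (Z p') $ i \<le> expval (Z p) $ i" for i
    using mean_cmp(1)[OF fM(1)[of i] fN(1)[of i] fM(2)[of i] fN(2)[of i] fM(3)[of i] fN(3)[of i]] mle[of i] by (simp add: fM(4,5) fN(4,5))
  moreover obtain i where "fsd_strict_comp (Z p) (Z p') i" using dd by (auto simp: dist_dom_def)
  then obtain t where "cdf_comp (Z p) i t < cdf_comp (Z p') i t" by (auto simp: fsd_strict_comp_def)
  then have "expval (Z p') $ i < expval (Z p) $ i"
    using mean_cmp(2)[OF fM(1)[of i] fN(1)[of i] fM(2)[of i] fN(2)[of i] fM(3)[of i] fN(3)[of i]] mle[of i] by (auto simp: fM(4,5) fN(4,5))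
  ultimately show "pareto_dom (expval (Z p)) (expval (Z p'))"
    unfolding pareto_dom_def by blast
qed

end
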